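(* Let $G,H$ be graphs, and let $\mathcal{F}$ be a family of graphs. If $m$ is an integer satisfying $m\ge 4|E(H)|\Delta$, where $\Delta$ is the maximum degree of $G$, then there exists a subgraph $G'\subseteq G$ which is $\mathcal{F}$-free such that \[\mathcal{N}_H(G')\ge \tfrac12\, \mathrm{ex}(m,H, \mathcal{L}(\mathcal{F}))\, m^{-v(H)}\cdot \mathcal{N}_H(G).\]
   Context: Graphs here are unrooted. For graphs $F,F'$, a map $\phi:V(F)\to V(F')$ is a local isomorphism if (a) $\phi$ is surjective, (b) for every edge $e\in E(F)$, $\phi(e)=\{\phi(x):x\in e\}\in E(F')$, and (c) for every two distinct edges $e,f\in E(F)$ with $e\cap f\ne\emptyset$, $\phi(e)\ne\phi(f)$. $\mathcal{L}(\mathcal{F})$ is the set of all graphs $F'$ for which some $F\in\mathcal{F}$ has a local isomorphism $V(F)\to V(F')$. $\mathcal{N}_H(G)$ is the number of subgraphs of $G$ isomorphic to $H$; a graph is $\mathcal{F}$-free if it contains no subgraph isomorphic to a member of $\mathcal{F}$; $\mathrm{ex}(m,H,\mathcal{F}')$ is the maximum of $\mathcal{N}_H(M)$ over $\mathcal{F}'$-free $m$-vertex graphs $M$. *)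

theory Defs
  imports Complex_Main
begin

type_synonym graph = "nat set \<times> nat set set"

definition verts :: "graph \<Rightarrow> nat set" where "verts G = fst G"
definition edges :: "graph \<Rightarrow> nat set set" where "edges G = snd G"

definition is_graph :: "graph \<Rightarrow> bool" where
  "is_graph G \<longleftrightarrow> finite (verts G) \<and>
     (\<forall>e\<in>edges G. e \<subseteq> verts G \<and> card e = 2)"

definition subgraph :: "graph \<Rightarrow> graph \<Rightarrow> bool" where
  "subgraph S G \<longleftrightarrow> is_graph S \<and> verts S \<subseteq> verts G \<and> edges S \<subseteq> edges G"

definition isomorphic :: "graph \<Rightarrow> graph \<Rightarrow> bool" where
  "isomorphic S H \<longleftrightarrow> (\<exists>f. bij_betw f (verts S) (verts H) \<and>
      edges H = (\<lambda>e. f ` e) ` edges S)"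

definition count_copies :: "graph \<Rightarrow> graph \<Rightarrow> nat" where
  "count_copies H G = card {S. subgraph S G \<and> isomorphic S H}"

definition free :: "graph set \<Rightarrow> graph \<Rightarrow> bool" where
  "free \<F> G \<longleftrightarrow> \<not> (\<exists>S F. subgraph S G \<and> F \<in> \<F> \<and> isomorphic S F)"

definition local_iso :: "(nat \<Rightarrow> nat) \<Rightarrow> graph \<Rightarrow> graph \<Rightarrow> bool" where
  "local_iso \<phi> F F' \<longleftrightarrow> \<phi> ` verts F = verts F' \<and>
     (\<forall>e\<in>edges F. \<phi> ` e \<in> edges F') \<and>
     (\<forall>e\<in>edges F. \<forall>f\<in>edges F. e \<noteq> f \<and> e \<inter> f \<noteq> {} \<longrightarrow> \<phi> ` e \<noteq> \<phi> ` f)"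

definition local_family :: "graph set \<Rightarrow> graph set" where
  "local_family \<F> = {F'. is_graph F' \<and> (\<exists>F\<in>\<F>. \<exists>\<phi>. local_iso \<phi> F F')}"

text \<open>Maximum degree (0 for the graph with no vertices).\<close>
definition max_degree :: "graph \<Rightarrow> nat" where
  "max_degree G = Max (insert 0 ((\<lambda>v. card {e\<in>edges G. v \<in> e}) ` verts G))"

text \<open>By isomorphism invariance we may take the vertex set {0..<m}.
  Convention: 0 if there is no such graph (Sup of the empty nat set).\<close>
definition ex :: "nat \<Rightarrow> graph \<Rightarrow> graph set \<Rightarrow> nat" where
  "ex m H \<F>' = Sup {count_copies H M | M. is_graph M \<and> verts M = {0..<m} \<and> free \<F>' M}"

end

theory Submission imports Defs "HOL-Library.FuncSet" begin

lemma verts_pair[simp]: "verts (a,b) = a" by (simp add: verts_def)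
lemma edges_pair[simp]: "edges (a,b) = b" by (simp add: edges_def)

lemma graph_edges_finite:
  assumes "is_graph G" shows "finite (edges G)"
proof -
  have "edges G \<subseteq> Pow (verts G)" using assms unfolding is_graph_def by auto
  thus ?thesis using assms unfolding is_graph_def by (meson finite_Pow_iff finite_subset)
qed

lemma empty_graph_sub: "is_graph G \<Longrightarrow> subgraph ({},{}) G"
  by (simp add: subgraph_def is_graph_def)

lemma empty_free:
  assumes "\<forall>F\<in>\<F>. is_graph F \<and> verts F \<noteq> {}"
  shows "free \<F> ({},{})"
  unfolding free_def
proof
  assume "\<exists>S F. subgraph S ({}, {}) \<and> F \<in> \<F> \<and> isomorphic S F"
  then obtain S F f where "subgraph S ({},{})" "F \<in> \<F>" "bij_betw f (verts S) (verts F)"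
    unfolding isomorphic_def by blast
  then show False using assms by (auto simp: subgraph_def bij_betw_def)
qed

lemma copies_finite:
  assumes "is_graph G" shows "finite {S. subgraph S G \<and> isomorphic S H}"
proof -
  have "{S. subgraph S G \<and> isomorphic S H} \<subseteq> Pow (verts G) \<times> Pow (edges G)"
    by (auto simp: subgraph_def verts_def edges_def)
  moreover have "finite (Pow (verts G) \<times> Pow (edges G))"
    using assms graph_edges_finite[OF assms] by (simp add: is_graph_def)
  ultimately show ?thesis by (rule finite_subset)
qed

lemma iso_compose:
  assumes "isomorphic S H" "isomorphic T H" "is_graph T"
  shows "\<exists>g. bij_betw g (verts S) (verts T) \<and> edges T = (\<lambda>e. g ` e) ` edges S"
proof -
  obtain g1 where g1: "bij_betw g1 (verts S) (verts H)" "edges H = (\<lambda>e. g1 ` e) ` edges S"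
    using assms(1) unfolding isomorphic_def by blast
  obtain g2 where g2: "bij_betw g2 (verts T) (verts H)" "edges H = (\<lambda>e. g2 ` e) ` edges T"
    using assms(2) unfolding isomorphic_def by blast
  define g where "g = inv_into (verts T) g2 \<circ> g1"
  have b: "bij_betw g (verts S) (verts T)" unfolding g_def
    using g1(1) g2(1) bij_betw_inv_into bij_betw_trans by blast
  have "(\<lambda>e. g ` e) ` edges S = (\<lambda>e. inv_into (verts T) g2 ` e) ` edges H"
    unfolding g1(2) g_def by (auto simp: image_comp image_image)
  also have "\<dots> = (\<lambda>e. inv_into (verts T) g2 ` e) ` (\<lambda>e. g2 ` e) ` edges T" using g2(2) by simp
  also have "\<dots> = edges T"
  proof -
    have "\<And>e. e \<in> edges T \<Longrightarrow> inv_into (verts T) g2 ` g2 ` e = e"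
      using assms(3) g2(1) unfolding is_graph_def bij_betw_def
      by (meson inv_into_image_cancel)
    thus ?thesis by (simp add: image_image)
  qed
  finally show ?thesis using b by auto
qed


definition Ep :: "graph \<Rightarrow> graph \<Rightarrow> (nat\<Rightarrow>nat) \<Rightarrow> nat set set" where
"Ep G M \<phi> = {e\<in>edges G. \<phi>`e \<in> edges M \<and> (\<forall>f\<in>edges G. f \<noteq> e \<and> f \<inter> e \<noteq> {} \<longrightarrow> \<phi>`f \<noteq> \<phi>`e)}"

definition Gp :: "graph \<Rightarrow> graph \<Rightarrow> (nat\<Rightarrow>nat) \<Rightarrow> graph" where
"Gp G M \<phi> = (verts G, Ep G M \<phi>)"

lemma Gp_sub: "is_graph G \<Longrightarrow> subgraph (Gp G M \<phi>) G"
  by (auto simp: Gp_def Ep_def subgraph_def is_graph_def)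

lemma Gp_free:
  assumes G: "is_graph G" and M: "is_graph M" "verts M = {0..<m}" "free (local_family \<F>) M"
    and F: "\<forall>F\<in>\<F>. is_graph F \<and> verts F \<noteq> {}"
    and phi: "\<phi> \<in> verts G \<rightarrow>\<^sub>E {0..<m}"
  shows "free \<F> (Gp G M \<phi>)"
  unfolding free_def
proof
  assume "\<exists>S F. subgraph S (Gp G M \<phi>) \<and> F \<in> \<F> \<and> isomorphic S F"
  then obtain S F g where S: "subgraph S (Gp G M \<phi>)" and FF: "F \<in> \<F>"
    and g: "bij_betw g (verts S) (verts F)" "edges F = (\<lambda>e. g ` e) ` edges S"
    unfolding isomorphic_def by blast
  have Fg: "is_graph F" using F FF by auto
  have Sg: "is_graph S" using S by (simp add: subgraph_def)
  have SE: "edges S \<subseteq> Ep G M \<phi>" "verts S \<subseteq> verts G" using S by (auto simp: subgraph_def Gp_def)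
  define \<psi> where "\<psi> = \<phi> \<circ> inv_into (verts S) g"
  define F' where "F' = (\<psi> ` verts F, (\<lambda>e. \<psi> ` e) ` edges F)"
  have key: "\<psi> ` (g ` a) = \<phi> ` a" if "a \<in> edges S" for a
  proof -
    have "a \<subseteq> verts S" using Sg that by (auto simp: is_graph_def)
    hence "inv_into (verts S) g ` g ` a = a" using g(1) unfolding bij_betw_def
      by (meson inv_into_image_cancel)
    thus ?thesis unfolding \<psi>_def by (metis image_comp)
  qed
  have edgesM: "\<phi> ` a \<in> edges M" if "a \<in> edges S" for a
    using SE(1) that by (auto simp: Ep_def)
  have F'g: "is_graph F'"
    unfolding is_graph_def F'_def
  proof (intro conjI ballI)
    show "finite (verts (\<psi> ` verts F, (`) \<psi> ` edges F))" using Fg by (simp add: is_graph_def)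
    fix e assume "e \<in> edges (\<psi> ` verts F, (`) \<psi> ` edges F)"
    then obtain a where a: "a \<in> edges S" "e = \<psi> ` (g ` a)" using g(2) by auto
    have "g ` a \<in> edges F" using a g(2) by auto
    hence "g ` a \<subseteq> verts F" using Fg by (auto simp: is_graph_def)
    thus "e \<subseteq> verts (\<psi> ` verts F, (`) \<psi> ` edges F)" using a by auto
    show "card e = 2" using a key edgesM M(1) by (auto simp: is_graph_def)
  qed
  have li: "local_iso \<psi> F F'"
    unfolding local_iso_def
  proof (intro conjI ballI impI)
    show "\<psi> ` verts F = verts F'" by (simp add: F'_def)
    fix e assume "e \<in> edges F" thus "\<psi> ` e \<in> edges F'" by (simp add: F'_def)
  next
    fix e f assume ef: "e \<in> edges F" "f \<in> edges F" "e \<noteq> f \<and> e \<inter> f \<noteq> {}"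
    obtain a where a: "a \<in> edges S" "e = g ` a" using ef g(2) by auto
    obtain b where b: "b \<in> edges S" "f = g ` b" using ef g(2) by auto
    have "a \<noteq> b" using a b ef by auto
    moreover have "a \<inter> b \<noteq> {}"
    proof
      assume "a \<inter> b = {}"
      have "a \<subseteq> verts S" "b \<subseteq> verts S" using a b Sg by (auto simp: is_graph_def)
      hence "g ` a \<inter> g ` b = g ` (a \<inter> b)" using g(1) unfolding bij_betw_def
        by (metis inj_on_image_Int)
      thus False using `a \<inter> b = {}` a b ef by auto
    qed
    moreover have "a \<in> Ep G M \<phi>" "b \<in> edges G" using a b SE by (auto simp: Ep_def)
    ultimately have "\<phi> ` b \<noteq> \<phi> ` a" unfolding Ep_def by blast
    thus "\<psi> ` e \<noteq> \<psi> ` f" using key a b by auto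
  qed
  have F'L: "F' \<in> local_family \<F>" unfolding local_family_def using F'g FF li by blast
  have "verts F' \<subseteq> verts M"
  proof
    fix y assume "y \<in> verts F'"
    then obtain x where x: "x \<in> verts F" "y = \<psi> x" by (auto simp: F'_def)
    have "inv_into (verts S) g x \<in> verts S" using g(1) x(1)
      by (metis bij_betw_def inv_into_into)
    hence "inv_into (verts S) g x \<in> verts G" using SE by auto
    thus "y \<in> verts M" using phi x M(2) unfolding \<psi>_def by auto
  qed
  moreover have "edges F' \<subseteq> edges M"
    using key edgesM g(2) by (auto simp: F'_def)
  ultimately have "subgraph F' M" using F'g by (simp add: subgraph_def)
  moreover have "isomorphic F' F'" unfolding isomorphic_def
    by (rule exI[of _ id]) simp
  ultimately show False using M(3) F'L unfolding free_def by blast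
qed


definition Aset :: "graph \<Rightarrow> graph \<Rightarrow> nat \<Rightarrow> graph \<Rightarrow> (nat \<Rightarrow> nat) set" where
"Aset G M m S = {\<phi> \<in> verts G \<rightarrow>\<^sub>E {0..<m}. inj_on \<phi> (verts S) \<and> (\<forall>e\<in>edges S. \<phi>`e \<in> edges M)}"

lemma Aset_finite: "is_graph G \<Longrightarrow> finite (Aset G M m S)"
  unfolding Aset_def
  by (rule finite_subset[of _ "verts G \<rightarrow>\<^sub>E {0..<m}"]) (auto simp: is_graph_def finite_PiE)

lemma Aset_lower:
  assumes G: "is_graph G" and M: "is_graph M" "verts M = {0..<m}"
    and S: "subgraph S G" "isomorphic S H"
  shows "count_copies H M * m ^ card (verts G - verts S) \<le> card (Aset G M m S)"
proof -
  let ?W = "verts S" and ?V = "verts G"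
  let ?C = "{T. subgraph T M \<and> isomorphic T H}"
  let ?P = "?V - ?W \<rightarrow>\<^sub>E {0..<m}"
  have Sg: "is_graph S" and WV: "?W \<subseteq> ?V" using S by (auto simp: subgraph_def)
  have ex: "\<exists>g. bij_betw g ?W (verts T) \<and> edges T = (\<lambda>e. g ` e) ` edges S" if "T \<in> ?C" for T
    using iso_compose[OF S(2)] that by (auto simp: subgraph_def)
  define gT where "gT T = (SOME g. bij_betw g ?W (verts T) \<and> edges T = (\<lambda>e. g ` e) ` edges S)" for T
  have gT: "bij_betw (gT T) ?W (verts T)" "edges T = (\<lambda>e. gT T ` e) ` edges S" if "T \<in> ?C" for T
    using someI_ex[OF ex[OF that]] unfolding gT_def by auto
  define \<Theta> where "\<Theta> = (\<lambda>(T,\<chi>). (\<lambda>x. if x \<in> ?W then gT T x else \<chi> x))"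
  have eqon: "\<Theta> (T,\<chi>) ` e = gT T ` e" if "e \<subseteq> ?W" for T \<chi> e
    using that unfolding \<Theta>_def by auto
  have edgeW: "e \<subseteq> ?W" if "e \<in> edges S" for e using Sg that by (auto simp: is_graph_def)
  have inj: "inj_on \<Theta> (?C \<times> ?P)"
  proof (rule inj_onI)
    fix p q assume p: "p \<in> ?C \<times> ?P" and q: "q \<in> ?C \<times> ?P" and eq0: "\<Theta> p = \<Theta> q"
    obtain T \<chi> T' \<chi>' where pq: "p = (T, \<chi>)" "q = (T', \<chi>')" by (cases p, cases q) auto
    have T: "T \<in> ?C" "\<chi> \<in> ?P" "T' \<in> ?C" "\<chi>' \<in> ?P" using p q pq by auto
    have eq: "\<Theta> (T, \<chi>) = \<Theta> (T', \<chi>')" using eq0 pq by simp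
    have "verts T = gT T ` ?W" using gT(1)[OF T(1)] by (simp add: bij_betw_def)
    also have "\<dots> = \<Theta> (T, \<chi>) ` ?W" using eqon by auto
    also have "\<dots> = \<Theta> (T', \<chi>') ` ?W" using eq by simp
    also have "\<dots> = gT T' ` ?W" using eqon by auto
    also have "\<dots> = verts T'" using gT(1)[OF T(3)] by (simp add: bij_betw_def)
    finally have v: "verts T = verts T'" .
    have "edges T = (\<lambda>e. \<Theta> (T, \<chi>) ` e) ` edges S" using gT(2)[OF T(1)] eqon edgeW by auto
    also have "\<dots> = (\<lambda>e. \<Theta> (T', \<chi>') ` e) ` edges S" using eq by simp
    also have "\<dots> = edges T'" using gT(2)[OF T(3)] eqon edgeW by auto
    finally have e: "edges T = edges T'" .
    have "T = T'" using v e by (metis prod.collapse verts_def edges_def)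
    moreover have "\<chi> = \<chi>'"
    proof
      fix x show "\<chi> x = \<chi>' x"
      proof (cases "x \<in> ?V - ?W")
        case True
        then have "\<Theta> (T, \<chi>) x = \<chi> x" "\<Theta> (T', \<chi>') x = \<chi>' x" unfolding \<Theta>_def by auto
        then show ?thesis using eq by simp
      next
        case False
        then show ?thesis using T(2,4) by (simp add: PiE_def extensional_def)
      qed
    qed
    ultimately show "p = q" using pq by simp
  qed
  have img: "\<Theta> ` (?C \<times> ?P) \<subseteq> Aset G M m S"
  proof (rule image_subsetI)
    fix p assume p: "p \<in> ?C \<times> ?P"
    obtain T \<chi> where pq: "p = (T, \<chi>)" by (cases p) auto
    have T: "T \<in> ?C" "\<chi> \<in> ?P" using p pq by auto
    have vT: "verts T \<subseteq> {0..<m}" "edges T \<subseteq> edges M" using T(1) M by (auto simp: subgraph_def)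
    have "\<Theta> (T, \<chi>) \<in> ?V \<rightarrow>\<^sub>E {0..<m}"
    proof (rule PiE_I)
      fix x assume x: "x \<in> ?V"
      show "\<Theta> (T, \<chi>) x \<in> {0..<m}"
      proof (cases "x \<in> ?W")
        case True
        then have "gT T x \<in> verts T" using gT(1)[OF T(1)] by (auto simp: bij_betw_def)
        then show ?thesis using True vT unfolding \<Theta>_def by auto
      next
        case False
        then show ?thesis using x T(2) unfolding \<Theta>_def by auto
      qed
    next
      fix x assume "x \<notin> ?V"
      then show "\<Theta> (T, \<chi>) x = undefined" using WV T(2) unfolding \<Theta>_def by auto
    qed
    moreover have "inj_on (\<Theta> (T, \<chi>)) ?W"
      using gT(1)[OF T(1)] unfolding bij_betw_def \<Theta>_def by (simp add: inj_on_def)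
    moreover have "\<forall>e\<in>edges S. \<Theta> (T, \<chi>) ` e \<in> edges M"
      using gT(2)[OF T(1)] eqon edgeW vT by auto
    ultimately show "\<Theta> p \<in> Aset G M m S" unfolding Aset_def pq by blast
  qed
  have "card (?C \<times> ?P) \<le> card (Aset G M m S)"
    using card_inj_on_le[OF inj img Aset_finite[OF G]] .
  moreover have "card (?C \<times> ?P) = count_copies H M * m ^ card (?V - ?W)"
    using G by (simp add: card_cartesian_product count_copies_def card_PiE is_graph_def)
  ultimately show ?thesis by simp
qed


lemma two_edges:
  assumes "card e = 2" "card f = 2" "e \<noteq> f" "e \<inter> f \<noteq> {}"
  shows "\<exists>a b c. e = {a,b} \<and> f = {a,c} \<and> a \<noteq> b \<and> a \<noteq> c \<and> b \<noteq> c"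
proof -
  obtain x y where e: "e = {x,y}" "x \<noteq> y" using assms(1) card_2_iff by metis
  obtain u w where f: "f = {u,w}" "u \<noteq> w" using assms(2) card_2_iff by metis
  show ?thesis using e f assms(3,4) by (cases "x = u"; cases "x = w"; cases "y = u"; cases "y = w") auto
qed

lemma bad_bound:
  assumes G: "is_graph G" and M: "is_graph M" and S: "subgraph S G"
    and e: "e \<in> edges S" and f: "f \<in> edges G" "f \<noteq> e" "f \<inter> e \<noteq> {}"
  shows "m * card {\<phi> \<in> Aset G M m S. \<phi>`f = \<phi>`e} \<le> card (Aset G M m S)"
proof -
  let ?A = "Aset G M m S" and ?W = "verts S" and ?V = "verts G"
  have Sg: "is_graph S" and WV: "?W \<subseteq> ?V" and ESE: "edges S \<subseteq> edges G"
    using S by (auto simp: subgraph_def)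
  have eW: "e \<subseteq> ?W" using Sg e by (auto simp: is_graph_def)
  have fV: "f \<subseteq> ?V" using G f by (auto simp: is_graph_def)
  have "card e = 2" "card f = 2" using G e f ESE by (auto simp: is_graph_def)
  then obtain a b c where abc: "e = {a,b}" "f = {a,c}" "a \<noteq> b" "a \<noteq> c" "b \<noteq> c"
    using two_edges f by metis
  let ?P0 = "{\<phi> \<in> ?A. \<phi> c = \<phi> b}"
  have sub: "{\<phi> \<in> ?A. \<phi>`f = \<phi>`e} \<subseteq> ?P0"
  proof clarify
    fix \<phi> assume \<phi>: "\<phi> \<in> ?A" "\<phi>`f = \<phi>`e"
    have "\<phi> ` e \<in> edges M" using \<phi> e by (auto simp: Aset_def)
    hence "card (\<phi> ` e) = 2" using M by (auto simp: is_graph_def)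
    hence "\<phi> a \<noteq> \<phi> b" using abc by auto
    moreover have "\<phi> b \<in> \<phi> ` f" using \<phi>(2) abc by auto
    ultimately show "\<phi> c = \<phi> b" using abc by auto
  qed
  show ?thesis
  proof (cases "c \<in> ?W")
    case True
    have "?P0 = {}"
    proof (rule ccontr)
      assume "?P0 \<noteq> {}"
      then obtain \<phi> where "\<phi> \<in> ?A" "\<phi> c = \<phi> b" by auto
      moreover have "b \<in> ?W" using eW abc by auto
      ultimately show False using True abc unfolding Aset_def by (auto simp: inj_on_def)
    qed
    then have "{\<phi> \<in> ?A. \<phi>`f = \<phi>`e} = {}" using sub by blast
    then have "card {\<phi> \<in> ?A. \<phi>`f = \<phi>`e} = 0" by (simp only: card.empty)
    then show ?thesis by (simp only: mult_0_right zero_le)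
  next
    case False
    have cV: "c \<in> ?V" using fV abc by auto
    define \<Theta> where "\<Theta> = (\<lambda>(\<phi>::nat\<Rightarrow>nat, j::nat). \<phi>(c := j))"
    have inj: "inj_on \<Theta> (?P0 \<times> {0..<m})"
    proof (rule inj_onI)
      fix p q assume p: "p \<in> ?P0 \<times> {0..<m}" and q: "q \<in> ?P0 \<times> {0..<m}" and eq0: "\<Theta> p = \<Theta> q"
      obtain \<phi> j \<phi>' j' where pq: "p = (\<phi>, j)" "q = (\<phi>', j')" by (cases p, cases q) auto
      have h: "\<phi> c = \<phi> b" "\<phi>' c = \<phi>' b" using p q pq by auto
      have eq: "\<phi>(c := j) = \<phi>'(c := j')" using eq0 pq unfolding \<Theta>_def by simp
      have "j = j'" using fun_cong[OF eq, of c] by simp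
      moreover have "\<phi> = \<phi>'"
      proof
        fix x show "\<phi> x = \<phi>' x"
        proof (cases "x = c")
          case True
          have "\<phi> b = \<phi>' b" using fun_cong[OF eq, of b] abc by simp
          then show ?thesis using True h by simp
        next
          case False
          then show ?thesis using fun_cong[OF eq, of x] by simp
        qed
      qed
      ultimately show "p = q" using pq by simp
    qed
    have img: "\<Theta> ` (?P0 \<times> {0..<m}) \<subseteq> ?A"
    proof (rule image_subsetI)
      fix p assume p: "p \<in> ?P0 \<times> {0..<m}"
      obtain \<phi> j where pq: "p = (\<phi>, j)" by (cases p) auto
      have \<phi>: "\<phi> \<in> ?A" "j < m" using p pq by auto
      have "\<phi>(c := j) \<in> ?V \<rightarrow>\<^sub>E {0..<m}"
        using \<phi> cV unfolding Aset_def by (auto simp: PiE_def extensional_def Pi_def)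
      moreover have "inj_on (\<phi>(c := j)) ?W"
        using \<phi> False unfolding Aset_def by (auto simp: inj_on_def)
      moreover have "\<forall>e\<in>edges S. \<phi>(c := j) ` e \<in> edges M"
      proof
        fix e' assume e': "e' \<in> edges S"
        have "e' \<subseteq> ?W" using Sg e' by (auto simp: is_graph_def)
        hence "\<phi>(c := j) ` e' = \<phi> ` e'" using False by auto
        thus "\<phi>(c := j) ` e' \<in> edges M" using \<phi> e' unfolding Aset_def by auto
      qed
      ultimately show "\<Theta> p \<in> ?A" unfolding pq \<Theta>_def Aset_def by simp
    qed
    have "card (?P0 \<times> {0..<m}) \<le> card ?A"
      using card_inj_on_le[OF inj img Aset_finite[OF G]] .
    hence "m * card ?P0 \<le> card ?A" by (simp add: card_cartesian_product mult.commute)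
    moreover have "card {\<phi> \<in> ?A. \<phi>`f = \<phi>`e} \<le> card ?P0"
      using sub by (intro card_mono) (auto intro: finite_subset[OF _ Aset_finite[OF G]])
    ultimately show ?thesis by (meson le_trans mult_le_mono2)
  qed
qed

lemma nbr_bound:
  assumes G: "is_graph G" and e: "e \<in> edges G"
  shows "card {f \<in> edges G. f \<noteq> e \<and> f \<inter> e \<noteq> {}} \<le> 2 * max_degree G"
proof -
  obtain a b where ab: "e = {a,b}" using G e card_2_iff unfolding is_graph_def by metis
  have abV: "a \<in> verts G" "b \<in> verts G" using G e ab by (auto simp: is_graph_def)
  have fin: "finite (edges G)" using graph_edges_finite[OF G] .
  have deg: "card {f \<in> edges G. v \<in> f} \<le> max_degree G" if "v \<in> verts G" for v
    unfolding max_degree_def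
    by (rule Max_ge) (use G that in \<open>auto simp: is_graph_def\<close>)
  have "{f \<in> edges G. f \<noteq> e \<and> f \<inter> e \<noteq> {}} \<subseteq> {f \<in> edges G. a \<in> f} \<union> {f \<in> edges G. b \<in> f}"
    using ab by auto
  hence "card {f \<in> edges G. f \<noteq> e \<and> f \<inter> e \<noteq> {}} \<le> card ({f \<in> edges G. a \<in> f} \<union> {f \<in> edges G. b \<in> f})"
    using fin by (intro card_mono) auto
  also have "\<dots> \<le> card {f \<in> edges G. a \<in> f} + card {f \<in> edges G. b \<in> f}" by (rule card_Un_le)
  also have "\<dots> \<le> 2 * max_degree G" using deg[OF abV(1)] deg[OF abV(2)] by linarith
  finally show ?thesis .
qed


lemma card_swap:
  assumes "finite A" "finite B"
  shows "(\<Sum>a\<in>A. card {b\<in>B. P a b}) = (\<Sum>b\<in>B. card {a\<in>A. P a b})"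
proof -
  have "(\<Sum>a\<in>A. card {b\<in>B. P a b}) = (\<Sum>a\<in>A. \<Sum>b\<in>B. if P a b then 1 else 0)"
    using assms by (simp add: sum.inter_filter[symmetric])
  also have "\<dots> = (\<Sum>b\<in>B. \<Sum>a\<in>A. if P a b then 1 else 0)" by (rule sum.swap)
  also have "\<dots> = (\<Sum>b\<in>B. card {a\<in>A. P a b})"
    using assms by (simp add: sum.inter_filter[symmetric])
  finally show ?thesis .
qed

lemma iso_edges_card:
  assumes "isomorphic S H" "is_graph S"
  shows "card (edges S) = card (edges H)" "card (verts S) = card (verts H)"
proof -
  obtain g where g: "bij_betw g (verts S) (verts H)" "edges H = (\<lambda>e. g ` e) ` edges S"
    using assms(1) unfolding isomorphic_def by blast
  have "inj_on (\<lambda>e. g ` e) (edges S)"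
  proof (rule inj_onI)
    fix x y assume "x \<in> edges S" "y \<in> edges S" "g ` x = g ` y"
    moreover have "inj_on g (verts S)" using g(1) by (simp add: bij_betw_def)
    ultimately show "x = y" using assms(2) unfolding is_graph_def
      by (metis inj_on_image_eq_iff)
  qed
  thus "card (edges S) = card (edges H)" using g(2) by (simp add: card_image)
  show "card (verts S) = card (verts H)" using g(1) by (rule bij_betw_same_card)
qed

lemma surv:
  assumes G: "is_graph G" and M: "is_graph M" "verts M = {0..<m}" and m: "m > 0"
    and S: "subgraph S G" "isomorphic S H"
    and mb: "4 * card (edges H) * max_degree G \<le> m"
  shows "count_copies H M * m ^ card (verts G - verts S)
     \<le> 2 * card {\<phi> \<in> verts G \<rightarrow>\<^sub>E {0..<m}. edges S \<subseteq> Ep G M \<phi>}"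
proof -
  let ?A = "Aset G M m S" and ?E = "edges G"
  let ?N = "\<lambda>e. {f \<in> ?E. f \<noteq> e \<and> f \<inter> e \<noteq> {}}"
  let ?B = "\<lambda>e f. {\<phi> \<in> ?A. \<phi>`f = \<phi>`e}"
  define Bad where "Bad = (\<Union>e\<in>edges S. \<Union>f\<in>?N e. ?B e f)"
  define Surv where "Surv = {\<phi> \<in> verts G \<rightarrow>\<^sub>E {0..<m}. edges S \<subseteq> Ep G M \<phi>}"
  have Sg: "is_graph S" and ESE: "edges S \<subseteq> ?E" using S by (auto simp: subgraph_def)
  have finE: "finite ?E" using graph_edges_finite[OF G] .
  have finES: "finite (edges S)" using graph_edges_finite[OF Sg] .
  have finA: "finite ?A" using Aset_finite[OF G] .
  have sub: "?A - Bad \<subseteq> Surv"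
  proof
    fix \<phi> assume \<phi>: "\<phi> \<in> ?A - Bad"
    have "e \<in> Ep G M \<phi>" if e: "e \<in> edges S" for e
    proof -
      have "\<phi> ` e \<in> edges M" using \<phi> e by (auto simp: Aset_def)
      moreover have "\<forall>f\<in>?E. f \<noteq> e \<and> f \<inter> e \<noteq> {} \<longrightarrow> \<phi>`f \<noteq> \<phi>`e"
        using \<phi> e unfolding Bad_def by blast
      ultimately show ?thesis using e ESE unfolding Ep_def by blast
    qed
    thus "\<phi> \<in> Surv" using \<phi> unfolding Surv_def Aset_def by auto
  qed
  have "card Bad \<le> (\<Sum>e\<in>edges S. card (\<Union>f\<in>?N e. ?B e f))"
    unfolding Bad_def by (rule card_UN_le[OF finES])
  also have "\<dots> \<le> (\<Sum>e\<in>edges S. \<Sum>f\<in>?N e. card (?B e f))"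
    by (rule sum_mono, rule card_UN_le) (use finE in auto)
  finally have cB: "card Bad \<le> (\<Sum>e\<in>edges S. \<Sum>f\<in>?N e. card (?B e f))" .
  have "m * card Bad \<le> (\<Sum>e\<in>edges S. \<Sum>f\<in>?N e. m * card (?B e f))"
    using mult_le_mono2[OF cB, of m] by (simp add: sum_distrib_left)
  also have "\<dots> \<le> (\<Sum>e\<in>edges S. \<Sum>f\<in>?N e. card ?A)"
  proof (rule sum_mono, rule sum_mono)
    fix e f assume "e \<in> edges S" "f \<in> ?N e"
    then show "m * card (?B e f) \<le> card ?A"
      using bad_bound[OF G M(1) S(1)] by auto
  qed
  also have "\<dots> = (\<Sum>e\<in>edges S. card (?N e) * card ?A)" by simp
  also have "\<dots> \<le> (\<Sum>e\<in>edges S. 2 * max_degree G * card ?A)"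
    using nbr_bound[OF G] ESE by (intro sum_mono mult_le_mono1) auto
  also have "\<dots> = card (edges S) * (2 * max_degree G * card ?A)" by simp
  also have "\<dots> = card (edges H) * (2 * max_degree G * card ?A)"
    using iso_edges_card[OF S(2) Sg] by simp
  finally have "2 * (m * card Bad) \<le> 4 * card (edges H) * max_degree G * card ?A" by (simp add: algebra_simps)
  also have "\<dots> \<le> m * card ?A" using mb by (intro mult_le_mono1)
  finally have "m * (2 * card Bad) \<le> m * card ?A" by simp
  hence bA: "2 * card Bad \<le> card ?A" using m by simp
  have "card ?A - card Bad \<le> card (?A - Bad)" by (rule diff_card_le_card_Diff) (rule finite_subset[OF _ finA], auto simp: Bad_def)
  also have "\<dots> \<le> card Surv"
    using sub by (intro card_mono) (auto simp: Surv_def intro: finite_subset[of _ "verts G \<rightarrow>\<^sub>E {0..<m}"] simp add: finite_PiE G[unfolded is_graph_def])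
  finally have "card ?A \<le> 2 * card Surv" using bA by linarith
  moreover have "count_copies H M * m ^ card (verts G - verts S) \<le> card ?A"
    using Aset_lower[OF G M S] .
  ultimately show ?thesis unfolding Surv_def by linarith
qed


lemma avg:
  fixes f :: "'a \<Rightarrow> nat"
  assumes "finite A" "A \<noteq> {}"
  shows "\<exists>x\<in>A. (\<Sum>y\<in>A. f y) \<le> card A * f x"
proof (rule ccontr)
  assume "\<not> ?thesis"
  hence "\<And>x. x \<in> A \<Longrightarrow> card A * f x < (\<Sum>y\<in>A. f y)" by auto
  hence "(\<Sum>x\<in>A. card A * f x) < (\<Sum>x\<in>A. \<Sum>y\<in>A. f y)"
    using assms by (intro sum_strict_mono) auto
  thus False by (simp add: sum_distrib_left)
qed

lemma main_M:
  assumes G: "is_graph G" and F: "\<forall>F\<in>\<F>. is_graph F \<and> verts F \<noteq> {}"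
    and M: "is_graph M" "verts M = {0..<m}" "free (local_family \<F>) M" and m: "m > 0"
    and mb: "4 * card (edges H) * max_degree G \<le> m"
    and cG: "count_copies H G > 0"
  shows "\<exists>G'. subgraph G' G \<and> free \<F> G' \<and>
     count_copies H G * count_copies H M \<le> 2 * m ^ card (verts H) * count_copies H G'"
proof -
  let ?\<Phi> = "verts G \<rightarrow>\<^sub>E {0..<m}"
  let ?C = "{S. subgraph S G \<and> isomorphic S H}"
  let ?n = "card (verts G)" and ?h = "card (verts H)"
  let ?cM = "count_copies H M"
  have finPhi: "finite ?\<Phi>" using G by (simp add: finite_PiE is_graph_def)
  have nePhi: "?\<Phi> \<noteq> {}" using m by (auto simp: PiE_eq_empty_iff)
  have finC: "finite ?C" using copies_finite[OF G] .
  have cardPhi: "card ?\<Phi> = m ^ ?n" using G by (simp add: card_PiE is_graph_def)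
  obtain S0 where "S0 \<in> ?C" using cG unfolding count_copies_def by (metis card.empty less_irrefl ex_in_conv)
  hence hn: "?h \<le> ?n" using iso_edges_card(2)[of S0 H] G
    by (auto simp: subgraph_def is_graph_def) (metis card_mono)
  have k: "card (verts G - verts S) = ?n - ?h" if "S \<in> ?C" for S
  proof -
    have "verts S \<subseteq> verts G" "is_graph S" using that by (auto simp: subgraph_def)
    thus ?thesis using iso_edges_card(2)[of S H] that G
      by (simp add: card_Diff_subset is_graph_def finite_subset)
  qed
  have step1: "card {S \<in> ?C. edges S \<subseteq> Ep G M \<phi>} \<le> count_copies H (Gp G M \<phi>)" for \<phi>
  proof -
    have "{S \<in> ?C. edges S \<subseteq> Ep G M \<phi>} \<subseteq> {S. subgraph S (Gp G M \<phi>) \<and> isomorphic S H}"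
      by (auto simp: subgraph_def Gp_def)
    moreover have "is_graph (Gp G M \<phi>)" using Gp_sub[OF G] by (simp add: subgraph_def)
    ultimately show ?thesis unfolding count_copies_def by (intro card_mono copies_finite)
  qed
  have "card ?C * ?cM * m ^ (?n - ?h) = (\<Sum>S\<in>?C. ?cM * m ^ card (verts G - verts S))"
    using k by simp
  also have "\<dots> \<le> (\<Sum>S\<in>?C. 2 * card {\<phi> \<in> ?\<Phi>. edges S \<subseteq> Ep G M \<phi>})"
    using surv[OF G M(1,2) m _ _ mb] by (intro sum_mono) auto
  also have "\<dots> = 2 * (\<Sum>\<phi>\<in>?\<Phi>. card {S \<in> ?C. edges S \<subseteq> Ep G M \<phi>})"
    using card_swap[OF finPhi finC, of "\<lambda>\<phi> S. edges S \<subseteq> Ep G M \<phi>"]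
    by (simp add: sum_distrib_left)
  also have "\<dots> \<le> 2 * (\<Sum>\<phi>\<in>?\<Phi>. count_copies H (Gp G M \<phi>))"
    using step1 by (simp add: sum_mono)
  finally have tot: "card ?C * ?cM * m ^ (?n - ?h) \<le> 2 * (\<Sum>\<phi>\<in>?\<Phi>. count_copies H (Gp G M \<phi>))" .
  obtain \<phi> where \<phi>: "\<phi> \<in> ?\<Phi>" "(\<Sum>\<phi>\<in>?\<Phi>. count_copies H (Gp G M \<phi>)) \<le> card ?\<Phi> * count_copies H (Gp G M \<phi>)"
    using avg[OF finPhi nePhi] by blast
  have "m ^ (?n - ?h) * (card ?C * ?cM) \<le> m ^ (?n - ?h) * (2 * m ^ ?h * count_copies H (Gp G M \<phi>))"
  proof -
    have "m ^ (?n - ?h) * (card ?C * ?cM) \<le> 2 * (card ?\<Phi> * count_copies H (Gp G M \<phi>))"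
      using tot \<phi>(2) by (simp add: algebra_simps)
    also have "card ?\<Phi> = m ^ (?n - ?h) * m ^ ?h" using cardPhi hn by (simp add: power_add[symmetric])
    finally show ?thesis by (simp add: algebra_simps)
  qed
  hence "card ?C * ?cM \<le> 2 * m ^ ?h * count_copies H (Gp G M \<phi>)" using m by simp
  moreover have "free \<F> (Gp G M \<phi>)" using Gp_free[OF G M F \<phi>(1)] .
  ultimately show ?thesis using Gp_sub[OF G] unfolding count_copies_def by blast
qed


lemma count_empty_H:
  assumes "verts H = {}" "is_graph X" "is_graph H"
  shows "count_copies H X = 1"
proof -
  have "{S. subgraph S X \<and> isomorphic S H} = {({},{})}"
  proof (intro equalityI subsetI)
    fix S assume S: "S \<in> {S. subgraph S X \<and> isomorphic S H}"
    then obtain g where g: "bij_betw g (verts S) (verts H)" "edges H = (\<lambda>e. g ` e) ` edges S"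
      unfolding isomorphic_def by blast
    have v: "verts S = {}" using g(1) assms(1) by (simp add: bij_betw_def)
    have "edges S = {}"
    proof (rule ccontr)
      assume "edges S \<noteq> {}"
      then obtain e where "e \<in> edges S" by auto
      moreover have "is_graph S" using S by (simp add: subgraph_def)
      ultimately have "card e = 2" "e \<subseteq> verts S" by (auto simp: is_graph_def)
      thus False using v by auto
    qed
    thus "S \<in> {({},{})}" using v by (metis prod.collapse verts_def edges_def singletonI)
  next
    fix S assume "S \<in> {({}::nat set,{}::nat set set)}"
    moreover have "edges H = {}"
      using assms(1,3) unfolding is_graph_def by fastforce
    ultimately show "S \<in> {S. subgraph S X \<and> isomorphic S H}"
      using empty_graph_sub[OF assms(2)] assms(1)
      by (auto simp: isomorphic_def bij_betw_def)
  qed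
  thus ?thesis unfolding count_copies_def by simp
qed


theorem proposition2p3:
  fixes G H :: graph and \<F> :: "graph set" and m :: nat
  assumes "is_graph G" and "is_graph H"
    and "\<forall>F\<in>\<F>. is_graph F \<and> verts F \<noteq> {}"
    and "m \<ge> 4 * card (edges H) * max_degree G"
  shows "\<exists>G'. subgraph G' G \<and> free \<F> G' \<and>
    real (count_copies H G') \<ge>
      1/2 * real (ex m H (local_family \<F>)) * (1 / real m ^ card (verts H)) * real (count_copies H G)"
proof -
  let ?ex = "ex m H (local_family \<F>)"
  let ?h = "card (verts H)"
  let ?R = "1/2 * real ?ex * (1 / real m ^ ?h) * real (count_copies H G)"
  let ?Ms = "{M. is_graph M \<and> verts M = {0..<m} \<and> free (local_family \<F>) M}"
  let ?Xs = "{count_copies H M | M. is_graph M \<and> verts M = {0..<m} \<and> free (local_family \<F>) M}"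
  have exd: "?ex = Sup ?Xs" unfolding ex_def by simp
  have Xs_img: "?Xs = (\<lambda>M. count_copies H M) ` ?Ms" by auto
  have E: "subgraph ({},{}) G" "free \<F> ({},{})"
    using empty_graph_sub[OF assms(1)] empty_free[OF assms(3)] by auto
  have Rz: "\<exists>G'. subgraph G' G \<and> free \<F> G' \<and> real (count_copies H G') \<ge> ?R" if "?R \<le> 0"
    using E that by (intro exI[of _ "({},{})"]) auto
  show ?thesis
  proof (cases "count_copies H G = 0")
    case True
    then show ?thesis using Rz by simp
  next
    case cG: False
    show ?thesis
    proof (cases "?h = 0")
      case True
      have vH: "verts H = {}" using True assms(2) by (simp add: is_graph_def)
      have c1: "count_copies H X = 1" if "is_graph X" for X
        using count_empty_H[OF vH that assms(2)] .
      have "?Xs \<subseteq> {1}" using c1 by auto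
      hence "?Xs = {} \<or> ?Xs = {1}" by (rule subset_singletonD)
      moreover have "\<And>X::nat set. X = {} \<or> X = {1} \<Longrightarrow> Sup X \<le> 1" by auto
      ultimately have "?ex \<le> 1" unfolding exd by blast
      moreover have "count_copies H ({},{}) = 1" using c1 by (simp add: is_graph_def)
      moreover have "count_copies H G = 1" using c1 assms(1) .
      ultimately show ?thesis using E True by (intro exI[of _ "({},{})"]) auto
    next
      case hpos: False
      show ?thesis
      proof (cases "m = 0")
        case True
        have "real m ^ ?h = 0" using True hpos by simp
        then have "?R = 0" by simp
        then show ?thesis using Rz by (metis order_refl)
      next
        case mpos: False
        have "?Ms \<subseteq> {{0..<m}} \<times> Pow (Pow {0..<m})"
        proof
          fix M assume M: "M \<in> ?Ms"
          hence "edges M \<subseteq> Pow {0..<m}" by (auto simp: is_graph_def)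
          thus "M \<in> {{0..<m}} \<times> Pow (Pow {0..<m})" using M
            by (cases M) auto
        qed
        hence "finite ?Ms" by (rule finite_subset) auto
        hence finX: "finite ?Xs" unfolding Xs_img by simp
        show ?thesis
        proof (cases "?Xs = {}")
          case True
          then have "?ex = 0" unfolding exd by (simp only: Sup_nat_empty)
          then show ?thesis using Rz by simp
        next
          case False
          have "?ex \<in> ?Xs" unfolding exd using cSup_eq_Max[OF finX False] Max_in[OF finX False] by simp
          then obtain M where M: "is_graph M" "verts M = {0..<m}" "free (local_family \<F>) M"
            "?ex = count_copies H M" by auto
          obtain G' where G': "subgraph G' G" "free \<F> G'"
            "count_copies H G * count_copies H M \<le> 2 * m ^ ?h * count_copies H G'"
            using main_M[OF assms(1,3) M(1,2,3), of H] mpos assms(4) cG by blast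
          have "real (count_copies H G) * real ?ex \<le> 2 * real m ^ ?h * real (count_copies H G')"
          proof -
            have "real (count_copies H G * count_copies H M) \<le> real (2 * m ^ ?h * count_copies H G')"
              using G'(3) by (simp only: of_nat_le_iff)
            thus ?thesis using M(4) by simp
          qed
          moreover have "real m ^ ?h > 0" using mpos by simp
          ultimately have "?R \<le> real (count_copies H G')"
            by (simp add: field_simps)
          then show ?thesis using G' by blast
        qed
      qed
    qed
  qed
qed

end
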